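(* Let $I=[1/2,1)$. For every dyadic rational $y\in I$ (i.e. $y$ has a finite binary expansion), the value $B(y)$ of the binary function defined below lies in $I$. In other words, $B$ maps the dyadic rationals of $I$ into $I$.
   Context: Every dyadic rational $y\in[1/2,1)$ has a unique finite binary expansion $y=(0.1\,a_{2}\cdots a_{\ell})_2$ with last digit $a_\ell=1$; the integer $\ell\ge 1$ is called the (total) length of $y$ (equivalently, $\ell$ is the least integer with $2^{\ell}y\in\mathbb{Z}$, and then $2^\ell y$ is odd). For $n\ge 0$ let $y^*_n=(0.1\{01\}^n)_2$, where $\{01\}^n$ denotes $n$ consecutive repetitions of the block $01$ (so $y^*_0=1/2$, $y^*_1=(0.101)_2=5/8$, etc.), and let $\mathcal{N}=\{y^*_n : n\ge 0\}$ (the "predecessors"). The binary function is defined, for a dyadic rational $y\in[1/2,1)$ of length $\ell$, by $$B(y)=\begin{cases}1/2, & y\in\mathcal{N},\\ (3y+2^{-\ell})/2, & y\in[1/2,2/3]\setminus\mathcal{N},\\ (3y+2^{-\ell})/4, & y\in(2/3,1).\end{cases}$$ *)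

theory Defs
  imports Complex_Main
begin

definition dyadic :: "real \<Rightarrow> bool" where
  "dyadic y \<longleftrightarrow> (\<exists>k::nat. 2 ^ k * y \<in> \<int>)"

definition dlen :: "real \<Rightarrow> nat" where
  "dlen y = (LEAST l::nat. 2 ^ l * y \<in> \<int>)"

text \<open>Predecessors y*_n = (0.1{01}^n)_2 = 1/2 + sum_{k=1..n} 2^-(2k+1).\<close>
definition ystar :: "nat \<Rightarrow> real" where
  "ystar n = 1/2 + (\<Sum>k=1..n. 1 / 2 ^ (2*k+1))"

definition preds :: "real set" where
  "preds = range ystar"

definition binB :: "real \<Rightarrow> real" where
  "binB y = (if y \<in> preds then 1/2
             else if y \<le> 2/3 then (3*y + 1 / 2 ^ dlen y) / 2
             else (3*y + 1 / 2 ^ dlen y) / 4)"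

end

theory Submission
  imports Defs
begin

lemma ystar_closed: "ystar n = (2 - 1 / 2 ^ (2*n+1)) / 3"
proof (induction n)
  case 0 then show ?case by (simp add: ystar_def)
next
  case (Suc n)
  have "ystar (Suc n) = ystar n + 1 / 2 ^ (2*(Suc n)+1)"
    by (simp add: ystar_def)
  then show ?case using Suc by (simp add: field_simps)
qed

lemma pow2_mod3: "(2::int) ^ k mod 3 = (if even k then 1 else 2)"
proof (induction k)
  case 0 then show ?case by simp
next
  case (Suc k)
  have "(2::int) ^ Suc k mod 3 = (2 * (2 ^ k mod 3)) mod 3" by (simp add: mod_mult_right_eq)
  then show ?case using Suc by (auto split: if_splits)
qed

theorem mainTheorem1:
  fixes y :: real
  assumes "dyadic y" and "1/2 \<le> y" and "y < 1"
  shows "1/2 \<le> binB y \<and> binB y < 1"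
proof -
  define l where "l = dlen y"
  have ex: "\<exists>k::nat. 2 ^ k * y \<in> \<int>" using assms(1) by (simp add: dyadic_def)
  have lI: "2 ^ l * y \<in> \<int>" unfolding l_def dlen_def using ex by (metis LeastI)
  then obtain m :: int where m: "of_int m = 2 ^ l * y" by (metis Ints_cases)
  define N :: int where "N = 2 ^ l"
  have Nr: "real_of_int N = 2 ^ l" by (simp add: N_def)
  have Npos: "N > 0" by (simp add: N_def)
  have ym: "y = of_int m / of_int N" using m Nr by (simp add: field_simps)
  have "real_of_int m < of_int N" using m Nr assms(3) by simp
  hence mN: "m + 1 \<le> N" by linarith
  have l1: "l \<ge> 1"
  proof (rule ccontr)
    assume "\<not> l \<ge> 1" hence "l = 0" by simp
    hence "N = 1" by (simp add: N_def)
    have "2 * real_of_int m \<ge> of_int N" using m Nr assms(2) by simp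
    with \<open>N = 1\<close> mN show False by linarith
  qed
  have Nge2: "N \<ge> 2" using l1 unfolding N_def
    using power_increasing[of 1 l "2::int"] by simp
  have e: "1 / 2 ^ dlen y = 1 / real_of_int N" using Nr l_def by simp
  show ?thesis
  proof (cases "y \<in> preds")
    case True then show ?thesis by (simp add: binB_def)
  next
    case np: False
    show ?thesis
    proof (cases "y \<le> 2/3")
      case True
      have B: "binB y = (3*y + 1 / of_int N) / 2" using np True e by (simp add: binB_def)
      have "3 * real_of_int m \<le> 2 * of_int N" using True ym Npos by (simp add: field_simps)
      hence c1: "3 * m \<le> 2 * N" by linarith
      have c2: "3 * m \<noteq> 2 * N"
      proof
        assume "3 * m = 2 * N"
        hence "(2 * N) mod 3 = 0" by presburger
        moreover have "2 * N = 2 ^ (Suc l)" by (simp add: N_def)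
        ultimately show False using pow2_mod3[of "Suc l"] by (simp split: if_splits)
      qed
      have c3: "3 * m + 1 \<noteq> 2 * N"
      proof
        assume h: "3 * m + 1 = 2 * N"
        have "2 * N = 2 ^ (Suc l)" by (simp add: N_def)
        hence "(2 * N) mod 3 = 1" using h by presburger
        hence "even (Suc l)" using pow2_mod3[of "Suc l"] \<open>2 * N = 2 ^ (Suc l)\<close>
          by (simp split: if_splits)
        then obtain n where ln: "l = 2*n+1" by (metis evenE even_Suc oddE)
        have "3 * real_of_int m + 1 = 2 * of_int N" using h by linarith
        hence "y = (2 - 1 / of_int N) / 3" using ym Npos by (simp add: field_simps)
        hence "y = ystar n" using ystar_closed[of n] Nr ln by simp
        thus False using np by (simp add: preds_def)
      qed
      have "3 * m + 2 \<le> 2 * N" using c1 c2 c3 by linarith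
      hence "3 * real_of_int m + 2 \<le> 2 * of_int N" by linarith
      hence "3*y + 1 / of_int N < 2" using ym Npos by (simp add: field_simps)
      moreover have "1 / real_of_int N > 0" using Npos by simp
      hence "3*y + 1 / of_int N \<ge> 1" using assms(2) by linarith
      ultimately show ?thesis using B by simp
    next
      case False
      have B: "binB y = (3*y + 1 / of_int N) / 4" using np False e by (simp add: binB_def)
      have "1 / real_of_int N \<le> 1/2" using Nge2 by (simp add: field_simps)
      moreover have "1 / real_of_int N > 0" using Npos by simp
      moreover have "\<And>t. t \<le> 1/2 \<Longrightarrow> 0 < t \<Longrightarrow> 1/2 \<le> (3*y+t)/4 \<and> (3*y+t)/4 < 1"
        using False assms(3) by auto
      ultimately show ?thesis unfolding B by blast
    qed
  qed
qed

end
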